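(* Let $n\ge 4$, $N=\{1,\dots,n\}$, fix distinct $i_1,i_2\in N$ and let $\hat N^c=N\setminus\{i_1,i_2\}$. Then the inequality $$\sum_{j\in\hat N^c}\left(x_{i_1j}+x_{ji_1}+x_{ji_2}\right)-x_{i_1i_2}-\sum_{j,j'\in\hat N^c:\,j\ne j'} x_{jj'}\le 3-\frac{(n-4)(n-5)}{2}$$ defines a facet of the weak order polytope $P^n_{WO}$.
   Context: Let $N=\{1,\dots,n\}$ and $A_N=\{(i,j): i,j\in N, i\ne j\}$. A weak order on $N$ is a binary relation $W\subseteq N\times N$ that is reflexive, transitive and total; $(i,j)\in W$ is read "$i$ is preferred over or tied with $j$". The characteristic vector of $W$ is $x^W\in\{0,1\}^{A_N}$ with $x^W_{(i,j)}=1$ if $(i,j)\in W$ and $0$ otherwise. The weak order polytope $P^n_{WO}$ is the convex hull of the characteristic vectors of all weak orders on $N$; its points are vectors $x\in\mathbb{R}^{A_N}$ and $x_{ij}$ denotes the coordinate $x_{(i,j)}$. $P^n_{WO}$ has dimension $n(n-1)$. An inequality $\pi x\le\pi_0$ defines a facet of a polytope $P$ if it is valid for $P$ (holds for all $x\in P$) and the face $P\cap\{x:\pi x=\pi_0\}$ is nonempty, proper, and contains $\dim(P)$ affinely independent points. *)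

theory Defs
  imports "HOL-Analysis.Analysis"
begin

text \<open>The ground set N is modelled by a finite type 'a with CARD('a) = n.
  Points of R^{A_N} are modelled as vectors in real^('a \<times> 'a); the diagonal
  coordinates (i,i) are not in A_N and are identically 0 for every
  characteristic vector.\<close>

definition weak_order :: "('a \<times> 'a) set \<Rightarrow> bool" where
  "weak_order W \<longleftrightarrow> refl W \<and> trans W \<and> total W"

definition char_vec :: "('a::finite \<times> 'a) set \<Rightarrow> real ^ ('a \<times> 'a)" where
  "char_vec W = (\<chi> p. if fst p \<noteq> snd p \<and> p \<in> W then 1 else 0)"

definition weak_order_polytope :: "(real ^ ('a::finite \<times> 'a)) set" where
  "weak_order_polytope = convex hull {char_vec W | W. weak_order W}"

definition defines_facet ::
  "('v::real_vector) set \<Rightarrow> nat \<Rightarrow> ('v \<Rightarrow> real) \<Rightarrow> real \<Rightarrow> bool" where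
  "defines_facet P d f c \<longleftrightarrow>
     (\<forall>x\<in>P. f x \<le> c) \<and>
     (let F = P \<inter> {x. f x = c} in
        F \<noteq> {} \<and> F \<noteq> P \<and>
        (\<exists>S \<subseteq> F. finite S \<and> card S = d \<and> \<not> affine_dependent S))"

end

theory Submission
  imports Defs
begin


definition ff :: "'a::finite \<Rightarrow> 'a \<Rightarrow> real ^ ('a \<times> 'a) \<Rightarrow> real" where
 "ff i1 i2 = (\<lambda>x. (\<Sum>j\<in>UNIV - {i1, i2}. x $ (i1, j) + x $ (j, i1) + x $ (j, i2))
                 - x $ (i1, i2)
                 - (\<Sum>p\<in>{(j, j'). j \<in> UNIV - {i1, i2} \<and> j' \<in> UNIV - {i1, i2} \<and> j \<noteq> j'}. x $ p))"

definition offd :: "'a set \<Rightarrow> ('a \<times> 'a) set" where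
 "offd A = {(j, j'). j \<in> A \<and> j' \<in> A \<and> j \<noteq> j'}"

lemma card_offd:
  assumes "finite A" shows "card (offd A) = card A * (card A - 1)"
proof -
  have "offd A = A \<times> A - (\<lambda>a. (a,a)) ` A" unfolding offd_def by auto
  moreover have "card ((\<lambda>a. (a,a)) ` A) = card A" by (rule card_image) (auto simp: inj_on_def)
  moreover have "(\<lambda>a. (a,a)) ` A \<subseteq> A \<times> A" by auto
  ultimately have "card (offd A) = card A * card A - card A"
    using assms by (simp add: card_Diff_subset card_cartesian_product finite_imageI)
  then show ?thesis by (simp add: diff_mult_distrib2)
qed

lemma sum_offd_swap:
  fixes h :: "'a \<times> 'a \<Rightarrow> real"
  shows "sum h (offd A) = sum (\<lambda>p. h (snd p, fst p)) (offd A)"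
proof -
  have "offd A = prod.swap ` offd A" unfolding offd_def by auto
  then have "sum h (offd A) = sum h (prod.swap ` offd A)" by simp
  also have "\<dots> = sum (h \<circ> prod.swap) (offd A)" by (rule sum.reindex) (auto simp: inj_on_def)
  finally show ?thesis by (simp add: comp_def prod.swap_def case_prod_beta)
qed

lemma arith1: fixes A B T X m k :: real
  assumes "A = m + k" "B \<le> m - (1-X)*k" "m*(m-1) + k*(k-1) \<le> 2*T" "0 \<le> (k-1)*(k-2)" "k \<le> k*k" "X=0 \<or> X=1"
  shows "A + B - X - T \<le> 3 - (m*m - 5*m+6)/2"
  using assms(6)
proof
  assume "X = 0" then show ?thesis using assms(1-5) by (simp add: algebra_simps field_simps) 
next
  assume "X = 1" then show ?thesis using assms(1-5) by (simp add: algebra_simps field_simps) 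
qed

lemma valid_wo:
  fixes i1 i2 :: "'a::finite" and W :: "('a\<times>'a) set"
  assumes wo: "weak_order W" and n4: "CARD('a) \<ge> 4" and d: "i1 \<noteq> i2"
  shows "ff i1 i2 (char_vec W) \<le> 3 - (real CARD('a) - 4) * (real CARD('a) - 5) / 2"
proof -
  define Nc where "Nc = (UNIV::'a set) - {i1,i2}"
  define m where "m = card Nc"
  have mC: "CARD('a) = m + 2" unfolding m_def Nc_def using d n4
    by (simp add: card_Diff_subset)
  have tot: "\<And>a b. a \<noteq> b \<Longrightarrow> (a,b) \<in> W \<or> (b,a) \<in> W" using wo
    unfolding weak_order_def total_on_def by auto
  have tr: "\<And>a b c. (a,b) \<in> W \<Longrightarrow> (b,c) \<in> W \<Longrightarrow> (a,c) \<in> W" using wo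
    unfolding weak_order_def trans_def by blast
  define x where "x = char_vec W"
  have xv: "\<And>a b. x $ (a,b) = (if a \<noteq> b \<and> (a,b) \<in> W then 1 else 0)"
    unfolding x_def char_vec_def by simp
  define K where "K = {j\<in>Nc. (i1,j) \<in> W \<and> (j,i1) \<in> W}"
  define k where "k = card K"
  have KN: "K \<subseteq> Nc" unfolding K_def by auto
  define X where "X = (if (i1,i2) \<in> W then 1 else 0::real)"
  have s1: "(\<Sum>j\<in>Nc. x $ (i1, j) + x $ (j, i1)) = (\<Sum>j\<in>Nc. 1 + (if j \<in> K then 1 else 0))"
  proof (rule sum.cong)
    fix j assume "j \<in> Nc"
    then have "j \<noteq> i1" unfolding Nc_def by auto
    then show "x $ (i1, j) + x $ (j, i1) = 1 + (if j \<in> K then 1 else 0)"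
      using tot[of i1 j] \<open>j \<in> Nc\<close> unfolding xv K_def by auto
  qed simp
  also have "\<dots> = m + k"
    unfolding sum.distrib using KN
    by (simp add: m_def k_def sum.inter_restrict[symmetric] Int_absorb1 Int_absorb2)
  finally have s1': "(\<Sum>j\<in>Nc. x $ (i1, j) + x $ (j, i1)) = m + k" .
  have s2: "(\<Sum>j\<in>Nc. x $ (j, i2)) \<le> (\<Sum>j\<in>Nc. 1 - (if j \<in> K \<and> (i1,i2) \<notin> W then 1 else 0))"
  proof (rule sum_mono)
    fix j assume "j \<in> Nc"
    show "x $ (j, i2) \<le> 1 - (if j \<in> K \<and> (i1,i2) \<notin> W then 1 else 0)"
      using tr[of i1 j i2] unfolding xv K_def by auto
  qed
  also have "\<dots> = m - (1 - X) * k"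
  proof (cases "(i1,i2) \<in> W")
    case True then show ?thesis by (simp add: X_def m_def)
  next
    case False then show ?thesis using KN
      by (simp add: X_def m_def k_def sum_subtractf sum.inter_restrict[symmetric] Int_absorb1 Int_absorb2)
  qed
  finally have s2': "(\<Sum>j\<in>Nc. x $ (j, i2)) \<le> m - (1 - X) * k" .
  have s3: "2 * (\<Sum>p\<in>offd Nc. x $ p) \<ge> m * (m - 1) + k * (k - 1)"
  proof -
    have "2 * (\<Sum>p\<in>offd Nc. x $ p) = (\<Sum>p\<in>offd Nc. x $ p + x $ (snd p, fst p))"
      using sum_offd_swap[of "\<lambda>p. x $ p" Nc] by (simp add: sum.distrib)
    also have "\<dots> \<ge> (\<Sum>p\<in>offd Nc. 1 + (if p \<in> offd K then 1 else 0))"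
    proof (rule sum_mono)
      fix p assume p: "p \<in> offd Nc"
      obtain a b where pab: "p = (a,b)" by (cases p)
      have "a \<noteq> b" using p pab unfolding offd_def by auto
      show "1 + (if p \<in> offd K then 1 else 0) \<le> x $ p + x $ (snd p, fst p)"
      proof (cases "p \<in> offd K")
        case True
        then have "a \<in> K" "b \<in> K" using pab unfolding offd_def by auto
        then have "(a,b) \<in> W" "(b,a) \<in> W" using tr unfolding K_def by blast+
        then show ?thesis using \<open>a \<noteq> b\<close> pab True by (simp add: xv)
      next
        case False
        then show ?thesis using \<open>a \<noteq> b\<close> pab tot[of a b] by (auto simp: xv)
      qed
    qed
    also have "(\<Sum>p\<in>offd Nc. 1 + (if p \<in> offd K then 1 else 0)) = real (card (offd Nc)) + real (card (offd K))"
    proof -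
      have "offd K \<subseteq> offd Nc" using KN unfolding offd_def by auto
      then show ?thesis
        by (simp add: sum.distrib sum.inter_restrict[symmetric] Int_absorb1 Int_absorb2)
    qed
    also have "\<dots> = m * (m - 1) + k * (k - 1)"
      using card_offd[of Nc] card_offd[of K] by (simp add: m_def k_def)
    finally show ?thesis .
  qed
  have "ff i1 i2 (char_vec W) = (\<Sum>j\<in>Nc. x $ (i1, j) + x $ (j, i1)) + (\<Sum>j\<in>Nc. x $ (j, i2))
        - x $ (i1, i2) - (\<Sum>p\<in>offd Nc. x $ p)"
    unfolding ff_def x_def Nc_def offd_def by (simp add: sum.distrib)
  also have "x $ (i1, i2) = X" unfolding xv X_def using d by simp
  finally have fe: "ff i1 i2 (char_vec W) = (\<Sum>j\<in>Nc. x $ (i1, j) + x $ (j, i1)) + (\<Sum>j\<in>Nc. x $ (j, i2))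
        - X - (\<Sum>p\<in>offd Nc. x $ p)" .
  have km: "k \<le> m" unfolding k_def m_def using KN by (simp add: card_mono)
  have kk: "(real k - 1) * (real k - 2) \<ge> 0"
  proof (cases "k \<le> 1")
    case True then have "k = 0 \<or> k = 1" by auto
    then show ?thesis by auto
  next
    case False then have "real k \<ge> 2" by simp
    then show ?thesis by simp
  qed
  have m2: "m \<ge> 2" using mC n4 by simp
  have X01: "X = 0 \<or> X = 1" unfolding X_def by simp
  have "real (m * (m - 1)) = real m * (real m - 1)" using m2 by (simp add: of_nat_diff)
  moreover have "real (k * (k - 1)) = real k * (real k - 1)"
    by (cases k) (simp_all add: of_nat_diff algebra_simps)
  ultimately have s3': "2 * (\<Sum>p\<in>offd Nc. x $ p) \<ge> real m * (real m - 1) + real k * (real k - 1)"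
    using s3 by linarith
  have kk2: "real k \<le> real k * real k" by (cases k) auto
  have e1: "(real k - 1) * (real k - 2) = real k * real k - 3 * real k + 2" by (simp add: algebra_simps)
  have e2: "(real (m + 2) - 4) * (real (m + 2) - 5) = real m * real m - 5 * real m + 6" by (simp add: algebra_simps)
  have e3: "real m * (real m - 1) = real m * real m - real m" "real k * (real k - 1) = real k * real k - real k"
    by (simp_all add: algebra_simps)
  have e4: "real (m + 2) = real m + 2" by simp
  have s1'': "(\<Sum>j\<in>Nc. x $ (i1, j) + x $ (j, i1)) = real m + real k" using s1' by simp
  have e2': "(real m + 2 - 4) * (real m + 2 - 5) = real m * real m - 5 * real m + 6" by (simp add: algebra_simps)
  have goal: "(\<Sum>j\<in>Nc. x $ (i1, j) + x $ (j, i1)) + (\<Sum>j\<in>Nc. x $ (j, i2)) - X - (\<Sum>p\<in>offd Nc. x $ p)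
      \<le> 3 - (real m * real m - 5 * real m + 6) / 2"
    by (rule arith1[OF s1'' s2' s3' kk kk2 X01])
  show ?thesis unfolding fe mC e4 e2' using goal by simp
qed



definition L :: "('a::finite \<times> 'a \<Rightarrow> real) \<Rightarrow> real ^ ('a \<times> 'a) \<Rightarrow> real" where
  "L g x = (\<Sum>p\<in>UNIV. g p * x $ p)"

definition pif :: "'a::finite \<Rightarrow> 'a \<Rightarrow> 'a \<times> 'a \<Rightarrow> real" where
  "pif i1 i2 p = (if fst p = i1 \<and> snd p \<noteq> i1 \<and> snd p \<noteq> i2 then 1 else 0)
     + (if snd p = i1 \<and> fst p \<noteq> i1 \<and> fst p \<noteq> i2 then 1 else 0)
     + (if snd p = i2 \<and> fst p \<noteq> i1 \<and> fst p \<noteq> i2 then 1 else 0)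
     - (if fst p = i1 \<and> snd p = i2 then 1 else 0)
     - (if fst p \<noteq> i1 \<and> fst p \<noteq> i2 \<and> snd p \<noteq> i1 \<and> snd p \<noteq> i2 \<and> fst p \<noteq> snd p then 1 else 0)"

lemma sum_img_UNIV:
  fixes x :: "real ^ ('a::finite \<times> 'a)"
  assumes "inj_on h A"
  shows "(\<Sum>a\<in>A. x $ h a) = (\<Sum>p\<in>UNIV. (if p \<in> h ` A then 1 else 0) * x $ p)"
proof -
  have "(\<Sum>a\<in>A. x $ h a) = (\<Sum>p\<in>h ` A. x $ p)" using sum.reindex[OF assms, of "\<lambda>p. x $ p"] by simp
  also have "\<dots> = (\<Sum>p\<in>UNIV. (if p \<in> h ` A then x $ p else 0))"
    using sum.inter_restrict[of UNIV "\<lambda>p. x $ p" "h ` A"] by simp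
  also have "\<dots> = (\<Sum>p\<in>UNIV. (if p \<in> h ` A then 1 else 0) * x $ p)"
    by (rule sum.cong) auto
  finally show ?thesis .
qed

lemma L_linear: "L g (u *\<^sub>R x + v *\<^sub>R y) = u * L g x + v * L g y"
  unfolding L_def by (simp add: sum.distrib sum_distrib_left algebra_simps)

lemma ff_L:
  fixes i1 i2 :: "'a::finite"
  assumes d: "i1 \<noteq> i2"
  shows "ff i1 i2 x = L (pif i1 i2) x"
proof -
  define Nc where "Nc = (UNIV::'a set) - {i1,i2}"
  have a1: "(\<Sum>j\<in>Nc. x $ (i1, j)) = (\<Sum>p\<in>UNIV. (if fst p = i1 \<and> snd p \<noteq> i1 \<and> snd p \<noteq> i2 then 1 else 0) * x $ p)"
  proof -
    have "(\<lambda>j. (i1, j)) ` Nc = {p. fst p = i1 \<and> snd p \<noteq> i1 \<and> snd p \<noteq> i2}" unfolding Nc_def by force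
    then show ?thesis using sum_img_UNIV[of "\<lambda>j. (i1, j)" Nc x] by (simp add: inj_on_def)
  qed
  have a2: "(\<Sum>j\<in>Nc. x $ (j, i1)) = (\<Sum>p\<in>UNIV. (if snd p = i1 \<and> fst p \<noteq> i1 \<and> fst p \<noteq> i2 then 1 else 0) * x $ p)"
  proof -
    have "(\<lambda>j. (j, i1)) ` Nc = {p. snd p = i1 \<and> fst p \<noteq> i1 \<and> fst p \<noteq> i2}" unfolding Nc_def by force
    then show ?thesis using sum_img_UNIV[of "\<lambda>j. (j, i1)" Nc x] by (simp add: inj_on_def)
  qed
  have a3: "(\<Sum>j\<in>Nc. x $ (j, i2)) = (\<Sum>p\<in>UNIV. (if snd p = i2 \<and> fst p \<noteq> i1 \<and> fst p \<noteq> i2 then 1 else 0) * x $ p)"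
  proof -
    have "(\<lambda>j. (j, i2)) ` Nc = {p. snd p = i2 \<and> fst p \<noteq> i1 \<and> fst p \<noteq> i2}" unfolding Nc_def by force
    then show ?thesis using sum_img_UNIV[of "\<lambda>j. (j, i2)" Nc x] by (simp add: inj_on_def)
  qed
  have a4: "x $ (i1, i2) = (\<Sum>p\<in>UNIV. (if fst p = i1 \<and> snd p = i2 then 1 else 0) * x $ p)"
  proof -
    have "(\<Sum>p\<in>UNIV. (if fst p = i1 \<and> snd p = i2 then 1 else 0) * x $ p) = (\<Sum>p\<in>UNIV. if p = (i1, i2) then x $ p else 0)"
      by (rule sum.cong) auto
    then show ?thesis by (simp add: sum.delta')
  qed
  have a5: "(\<Sum>p\<in>{(j, j'). j \<in> UNIV - {i1, i2} \<and> j' \<in> UNIV - {i1, i2} \<and> j \<noteq> j'}. x $ p)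
     = (\<Sum>p\<in>UNIV. (if fst p \<noteq> i1 \<and> fst p \<noteq> i2 \<and> snd p \<noteq> i1 \<and> snd p \<noteq> i2 \<and> fst p \<noteq> snd p then 1 else 0) * x $ p)"
  proof -
    have "(\<lambda>j. j) ` {(j, j'). j \<in> UNIV - {i1, i2} \<and> j' \<in> UNIV - {i1, i2} \<and> j \<noteq> j'} = {p. fst p \<noteq> i1 \<and> fst p \<noteq> i2 \<and> snd p \<noteq> i1 \<and> snd p \<noteq> i2 \<and> fst p \<noteq> snd p}" by force
    then show ?thesis using sum_img_UNIV[of "\<lambda>j. j" "{(j, j'). j \<in> UNIV - {i1, i2} \<and> j' \<in> UNIV - {i1, i2} \<and> j \<noteq> j'}" x] by simp
  qed
  show ?thesis
    unfolding ff_def L_def pif_def sum.distrib a1[unfolded Nc_def] a2[unfolded Nc_def] a3[unfolded Nc_def] a4 a5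
    by (simp add: sum.distrib sum_subtractf algebra_simps)
qed

definition WOr :: "('a \<Rightarrow> nat) \<Rightarrow> ('a \<times> 'a) set" where
  "WOr R = {(x, y). R y \<le> R x}"

lemma weak_order_WOr: "weak_order (WOr R)"
  unfolding weak_order_def WOr_def refl_on_def trans_def total_on_def by auto

lemma cv_WOr: "char_vec (WOr R) $ (u, v) = (if u \<noteq> v \<and> R v \<le> R u then 1 else 0)"
  unfolding char_vec_def WOr_def by simp

definition rk :: "'a \<Rightarrow> 'a \<Rightarrow> 'a \<Rightarrow> 'a \<Rightarrow> ('a \<Rightarrow> nat) \<Rightarrow> nat \<Rightarrow> nat \<Rightarrow> nat \<Rightarrow> nat \<Rightarrow> 'a \<Rightarrow> nat" where
  "rk i1 i2 j j' \<rho> a b c d x = (if x = i1 then a else if x = i2 then b else if x = j then c else if x = j' then d else 10 + \<rho> x)"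

lemma rk_le9: "a \<le> 9 \<Longrightarrow> b \<le> 9 \<Longrightarrow> c \<le> 9 \<Longrightarrow> d \<le> 9 \<Longrightarrow> x \<in> {i1,i2,j,j'} \<Longrightarrow> rk i1 i2 j j' \<rho> a b c d x \<le> 9"
  unfolding rk_def by auto

lemma rk_out: "x \<notin> {i1,i2,j,j'} \<Longrightarrow> rk i1 i2 j j' \<rho> a b c d x = 10 + \<rho> x"
  unfolding rk_def by auto

lemma diff4:
  fixes g :: "'a::finite \<times> 'a \<Rightarrow> real" and i1 i2 j j' :: 'a and \<rho> :: "'a \<Rightarrow> nat"
  assumes le: "a \<le> 9" "b \<le> 9" "c \<le> 9" "d \<le> 9" "a' \<le> 9" "b' \<le> 9" "c' \<le> 9" "d' \<le> 9"
  defines "R \<equiv> rk i1 i2 j j' \<rho> a b c d" and "R' \<equiv> rk i1 i2 j j' \<rho> a' b' c' d'"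
  shows "L g (char_vec (WOr R)) - L g (char_vec (WOr R')) =
    (\<Sum>u\<in>{i1,i2,j,j'}. \<Sum>v\<in>{i1,i2,j,j'}. g (u,v) * ((if u \<noteq> v \<and> R v \<le> R u then 1 else 0) - (if u \<noteq> v \<and> R' v \<le> R' u then 1 else 0)))"
proof -
  define Q where "Q = {i1,i2,j,j'}"
  define h where "h = (\<lambda>p. g p * (char_vec (WOr R) $ p - char_vec (WOr R') $ p))"
  have "L g (char_vec (WOr R)) - L g (char_vec (WOr R')) = sum h UNIV"
    unfolding L_def h_def by (simp add: sum_subtractf algebra_simps)
  also have "sum h UNIV = sum h (Q \<times> Q)"
  proof (rule sum.mono_neutral_right)
    show "\<forall>p\<in>UNIV - Q \<times> Q. h p = 0"
    proof
      fix p assume "p \<in> UNIV - Q \<times> Q"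
      moreover obtain u v where p: "p = (u,v)" by (cases p)
      ultimately have uv: "u \<notin> Q \<or> v \<notin> Q" by auto
      have R9: "\<And>x. x \<in> Q \<Longrightarrow> R x \<le> 9" "\<And>x. x \<in> Q \<Longrightarrow> R' x \<le> 9"
        unfolding R_def R'_def Q_def rk_def using le by auto
      have Ro: "\<And>x. x \<notin> Q \<Longrightarrow> R x = 10 + \<rho> x" "\<And>x. x \<notin> Q \<Longrightarrow> R' x = 10 + \<rho> x"
        unfolding R_def R'_def Q_def rk_def by auto
      show "h p = 0"
      proof (cases "u \<in> Q")
        case True
        then have "v \<notin> Q" using uv by auto
        then show ?thesis using R9[OF True] Ro[OF \<open>v \<notin> Q\<close>] unfolding h_def p cv_WOr by auto
      next
        case False
        show ?thesis
        proof (cases "v \<in> Q")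
          case True
          then show ?thesis using R9[OF True] Ro[OF False] False unfolding h_def p cv_WOr by auto
        next
          case F2: False
          then show ?thesis using Ro[OF False] Ro[OF F2] unfolding h_def p cv_WOr by auto
        qed
      qed
    qed
  qed auto
  also have "\<dots> = (\<Sum>u\<in>Q. \<Sum>v\<in>Q. h (u, v))" by (simp add: sum.cartesian_product)
  finally show ?thesis unfolding Q_def h_def cv_WOr by simp
qed



abbreviation cst :: "nat \<Rightarrow> real" where "cst n \<equiv> 3 - (real n - 4) * (real n - 5) / 2"

lemma base_tight:
  fixes i1 i2 j j' :: "'a::finite"
  assumes dist: "distinct [i1,i2,j,j']" and inj: "inj \<rho>" and n4: "CARD('a) \<ge> 4"
  shows "ff i1 i2 (char_vec (WOr (rk i1 i2 j j' \<rho> 0 1 2 3))) = cst CARD('a)"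
proof -
  define R where "R = rk i1 i2 j j' \<rho> 0 1 2 3"
  define x where "x = char_vec (WOr R)"
  define Nc where "Nc = (UNIV::'a set) - {i1,i2}"
  define m where "m = card Nc"
  have mC: "CARD('a) = m + 2" unfolding m_def Nc_def using dist n4
    by (simp add: card_Diff_subset)
  have xv: "\<And>u v. x $ (u,v) = (if u \<noteq> v \<and> R v \<le> R u then 1 else 0)" unfolding x_def cv_WOr by simp
  have Ri: "R i1 = 0" "R i2 = 1" using dist unfolding R_def rk_def by auto
  have RN: "\<And>u. u \<in> Nc \<Longrightarrow> R u \<ge> 2" using dist unfolding R_def rk_def Nc_def by auto
  have Rinj: "\<And>u v. u \<in> Nc \<Longrightarrow> v \<in> Nc \<Longrightarrow> R u = R v \<Longrightarrow> u = v"
    using dist inj unfolding R_def rk_def Nc_def inj_def by (auto split: if_splits)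
  have s1: "(\<Sum>u\<in>Nc. x $ (i1, u) + x $ (u, i1) + x $ (u, i2)) = (\<Sum>u\<in>Nc. 2)"
  proof (rule sum.cong)
    fix u assume u: "u \<in> Nc"
    then have "u \<noteq> i1" "u \<noteq> i2" unfolding Nc_def by auto
    then show "x $ (i1, u) + x $ (u, i1) + x $ (u, i2) = 2" using RN[OF u] Ri by (simp add: xv)
  qed simp
  have s2: "x $ (i1, i2) = 0" using Ri dist by (simp add: xv)
  have s3: "2 * (\<Sum>p\<in>offd Nc. x $ p) = (\<Sum>p\<in>offd Nc. 1)"
  proof -
    have "2 * (\<Sum>p\<in>offd Nc. x $ p) = (\<Sum>p\<in>offd Nc. x $ p + x $ (snd p, fst p))"
      using sum_offd_swap[of "\<lambda>p. x $ p" Nc] by (simp add: sum.distrib)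
    also have "\<dots> = (\<Sum>p\<in>offd Nc. 1)"
    proof (rule sum.cong)
      fix p assume p: "p \<in> offd Nc"
      obtain a b where pab: "p = (a,b)" by (cases p)
      have "a \<noteq> b" "a \<in> Nc" "b \<in> Nc" using p pab unfolding offd_def by auto
      then have "R a \<noteq> R b" using Rinj by blast
      then show "x $ p + x $ (snd p, fst p) = 1" using pab \<open>a \<noteq> b\<close> by (auto simp: xv)
    qed simp
    finally show ?thesis .
  qed
  have cN: "card (offd Nc) = m * (m - 1)" using card_offd[of Nc] by (simp add: m_def)
  have m2: "m \<ge> 2" using mC n4 by simp
  have cN': "real (card (offd Nc)) = real m * real m - real m" unfolding cN using m2
    by (simp add: of_nat_diff algebra_simps)
  have fe: "ff i1 i2 x = (\<Sum>u\<in>Nc. x $ (i1, u) + x $ (u, i1) + x $ (u, i2)) - x $ (i1, i2) - (\<Sum>p\<in>offd Nc. x $ p)"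
    unfolding ff_def Nc_def offd_def by simp
  have "ff i1 i2 x = 2 * real m - (real m * real m - real m) / 2"
    unfolding fe s1 s2 using s3 cN' by (simp add: m_def)
  then show ?thesis unfolding x_def R_def mC by (simp add: algebra_simps field_simps)
qed



lemma pair_eq:
  fixes i1 i2 j j' :: "'a::finite" and g :: "'a \<times> 'a \<Rightarrow> real" and \<rho> :: "'a \<Rightarrow> nat"
  assumes H: "\<And>W. weak_order W \<Longrightarrow> ff i1 i2 (char_vec W) = cst CARD('a) \<Longrightarrow> L g (char_vec W) = Cz"
    and dist: "distinct [i1,i2,j,j']" and inj: "inj \<rho>" and n4: "CARD('a) \<ge> 4"
    and le: "a \<le> 9" "b \<le> 9" "c \<le> 9" "d \<le> 9" "a' \<le> 9" "b' \<le> 9" "c' \<le> 9" "d' \<le> 9"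
    and t1: "L (pif i1 i2) (char_vec (WOr (rk i1 i2 j j' \<rho> a b c d))) - L (pif i1 i2) (char_vec (WOr (rk i1 i2 j j' \<rho> 0 1 2 3))) = 0"
    and t2: "L (pif i1 i2) (char_vec (WOr (rk i1 i2 j j' \<rho> a' b' c' d'))) - L (pif i1 i2) (char_vec (WOr (rk i1 i2 j j' \<rho> 0 1 2 3))) = 0"
  shows "L g (char_vec (WOr (rk i1 i2 j j' \<rho> a b c d))) - L g (char_vec (WOr (rk i1 i2 j j' \<rho> a' b' c' d'))) = 0"
proof -
  have d12: "i1 \<noteq> i2" using dist by simp
  have b: "ff i1 i2 (char_vec (WOr (rk i1 i2 j j' \<rho> 0 1 2 3))) = cst CARD('a)"
    by (rule base_tight[OF dist inj n4])
  have "ff i1 i2 (char_vec (WOr (rk i1 i2 j j' \<rho> a b c d))) = cst CARD('a)"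
    using t1 b unfolding ff_L[OF d12] by simp
  then have "L g (char_vec (WOr (rk i1 i2 j j' \<rho> a b c d))) = Cz" by (rule H[OF weak_order_WOr])
  moreover have "ff i1 i2 (char_vec (WOr (rk i1 i2 j j' \<rho> a' b' c' d'))) = cst CARD('a)"
    using t2 b unfolding ff_L[OF d12] by simp
  then have "L g (char_vec (WOr (rk i1 i2 j j' \<rho> a' b' c' d'))) = Cz" by (rule H[OF weak_order_WOr])
  ultimately show ?thesis by simp
qed

lemma rk_eval:
  assumes "distinct [i1,i2,j,j']"
  shows "rk i1 i2 j j' \<rho> a b c d i1 = a" "rk i1 i2 j j' \<rho> a b c d i2 = b"
        "rk i1 i2 j j' \<rho> a b c d j = c" "rk i1 i2 j j' \<rho> a b c d j' = d"
  using assms unfolding rk_def by auto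

lemma dist_neq: "distinct [i1,i2,j,j'] \<Longrightarrow> i1 \<noteq> i2 \<and> i2 \<noteq> i1 \<and> i1 \<noteq> j \<and> j \<noteq> i1 \<and> i1 \<noteq> j' \<and> j' \<noteq> i1
  \<and> i2 \<noteq> j \<and> j \<noteq> i2 \<and> i2 \<noteq> j' \<and> j' \<noteq> i2 \<and> j \<noteq> j' \<and> j' \<noteq> j"
  by auto

lemma eqs:
  fixes ia ib j j' :: "'a::finite" and g :: "'a \<times> 'a \<Rightarrow> real" and \<rho> :: "'a \<Rightarrow> nat"
  assumes HA: "\<forall>W. weak_order W \<longrightarrow> ff ia ib (char_vec W) = cst CARD('a) \<longrightarrow> L g (char_vec W) = Cz"
    and dist: "distinct [ia,ib,j,j']" and inj: "inj \<rho>" and n4: "CARD('a) \<ge> 4"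
  shows "g (j, j') = g (j', j)" "g (ib, j) = 0" "g (ia, j) + g (ib, j) = g (j, ib)" "g (ia, j') + g (j, j') = 0" "g (ia, j) + g (j', j) = g (j, ia) + g (j, j')" "g (ib, ia) + g (ib, j) = 0" "g (ia, ib) + g (j, ib) = g (ib, ia) + g (ib, j)"
proof -
  have H: "\<And>W. weak_order W \<Longrightarrow> ff ia ib (char_vec W) = cst CARD('a) \<Longrightarrow> L g (char_vec W) = Cz" using HA by blast
  have "L g (char_vec (WOr (rk ia ib j j' \<rho> 0 1 2 3))) - L g (char_vec (WOr (rk ia ib j j' \<rho> 0 1 3 2))) = 0"
    apply (rule pair_eq[OF H dist inj n4])
    using dist_neq[OF dist] apply (simp_all add: diff4 pif_def rk_eval[OF dist])
    done
  then show "g (j, j') = g (j', j)" using dist_neq[OF dist] by (simp add: diff4 rk_eval[OF dist] algebra_simps)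
  have "L g (char_vec (WOr (rk ia ib j j' \<rho> 0 1 2 3))) - L g (char_vec (WOr (rk ia ib j j' \<rho> 0 1 1 3))) = 0"
    apply (rule pair_eq[OF H dist inj n4])
    using dist_neq[OF dist] apply (simp_all add: diff4 pif_def rk_eval[OF dist])
    done
  then show "g (ib, j) = 0" using dist_neq[OF dist] by (simp add: diff4 rk_eval[OF dist] algebra_simps)
  have "L g (char_vec (WOr (rk ia ib j j' \<rho> 0 1 2 3))) - L g (char_vec (WOr (rk ia ib j j' \<rho> 0 1 0 3))) = 0"
    apply (rule pair_eq[OF H dist inj n4])
    using dist_neq[OF dist] apply (simp_all add: diff4 pif_def rk_eval[OF dist])
    done
  then show "g (ia, j) + g (ib, j) = g (j, ib)" using dist_neq[OF dist] by (simp add: diff4 rk_eval[OF dist] algebra_simps)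
  have "L g (char_vec (WOr (rk ia ib j j' \<rho> 1 0 1 2))) - L g (char_vec (WOr (rk ia ib j j' \<rho> 1 0 1 1))) = 0"
    apply (rule pair_eq[OF H dist inj n4])
    using dist_neq[OF dist] apply (simp_all add: diff4 pif_def rk_eval[OF dist])
    done
  then show "g (ia, j') + g (j, j') = 0" using dist_neq[OF dist] by (simp add: diff4 rk_eval[OF dist] algebra_simps)
  have "L g (char_vec (WOr (rk ia ib j j' \<rho> 2 0 1 2))) - L g (char_vec (WOr (rk ia ib j j' \<rho> 1 0 2 1))) = 0"
    apply (rule pair_eq[OF H dist inj n4])
    using dist_neq[OF dist] apply (simp_all add: diff4 pif_def rk_eval[OF dist])
    done
  then show "g (ia, j) + g (j', j) = g (j, ia) + g (j, j')" using dist_neq[OF dist] by (simp add: diff4 rk_eval[OF dist] algebra_simps)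
  have "L g (char_vec (WOr (rk ia ib j j' \<rho> 1 0 1 2))) - L g (char_vec (WOr (rk ia ib j j' \<rho> 0 0 0 2))) = 0"
    apply (rule pair_eq[OF H dist inj n4])
    using dist_neq[OF dist] apply (simp_all add: diff4 pif_def rk_eval[OF dist])
    done
  then show "g (ib, ia) + g (ib, j) = 0" using dist_neq[OF dist] by (simp add: diff4 rk_eval[OF dist] algebra_simps)
  have "L g (char_vec (WOr (rk ia ib j j' \<rho> 1 0 1 2))) - L g (char_vec (WOr (rk ia ib j j' \<rho> 0 1 0 2))) = 0"
    apply (rule pair_eq[OF H dist inj n4])
    using dist_neq[OF dist] apply (simp_all add: diff4 pif_def rk_eval[OF dist])
    done
  then show "g (ia, ib) + g (j, ib) = g (ib, ia) + g (ib, j)" using dist_neq[OF dist] by (simp add: diff4 rk_eval[OF dist] algebra_simps)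
qed



lemma g_form:
  fixes i1 i2 j0 :: "'a::finite" and g :: "'a \<times> 'a \<Rightarrow> real" and \<rho> :: "'a \<Rightarrow> nat"
  assumes H: "\<And>W. weak_order W \<Longrightarrow> ff i1 i2 (char_vec W) = cst CARD('a) \<Longrightarrow> L g (char_vec W) = Cz"
    and d: "i1 \<noteq> i2" and inj: "inj \<rho>" and n4: "CARD('a) \<ge> 4"
    and j0: "j0 \<noteq> i1" "j0 \<noteq> i2"
    and ab: "a \<noteq> b"
  shows "g (a, b) = g (i1, j0) * pif i1 i2 (a, b)"
proof -
  have other: "\<exists>j'. distinct [i1,i2,j,j']" if "j \<noteq> i1" "j \<noteq> i2" for j
  proof -
    have "card {i1,i2,j} = 3" using that d by simp
    then have "{i1,i2,j} \<noteq> UNIV" using n4 by (metis numeral_le_iff semiring_norm(69) semiring_norm(72) n4 not_numeral_le_zero) 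
    then obtain j' where "j' \<notin> {i1,i2,j}" by auto
    then show ?thesis using that d by auto
  qed
  define \<mu> where "\<mu> = g (i1, j0)"
  have HA: "\<forall>W. weak_order W \<longrightarrow> ff i1 i2 (char_vec W) = cst CARD('a) \<longrightarrow> L g (char_vec W) = Cz" using H by blast
  note E = eqs[OF HA _ inj n4]
  have gi1: "g (i1, j) = \<mu>" if "j \<noteq> i1" "j \<noteq> i2" for j
  proof (cases "j = j0")
    case True then show ?thesis by (simp add: \<mu>_def)
  next
    case False
    then have D1: "distinct [i1,i2,j0,j]" "distinct [i1,i2,j,j0]" using that j0 d by auto
    show ?thesis using E(4)[OF D1(1)] E(4)[OF D1(2)] E(1)[OF D1(1)] unfolding \<mu>_def by linarith
  qed
  obtain j1 where D0: "distinct [i1,i2,j0,j1]" using other j0 by blast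
  show ?thesis
  proof (cases "a = i1")
    case a1: True
    show ?thesis
    proof (cases "b = i2")
      case True
      have "g (i1, i2) = - \<mu>" using E(2)[OF D0] E(3)[OF D0] E(6)[OF D0] E(7)[OF D0] unfolding \<mu>_def by linarith
      then show ?thesis using a1 True d by (simp add: pif_def \<mu>_def)
    next
      case False
      then show ?thesis using a1 ab gi1[of b] d by (simp add: pif_def \<mu>_def)
    qed
  next
    case na1: False
    show ?thesis
    proof (cases "a = i2")
      case a2: True
      show ?thesis
      proof (cases "b = i1")
        case True
        have "g (i2, i1) = 0" using E(2)[OF D0] E(6)[OF D0] by linarith
        then show ?thesis using a2 True d by (simp add: pif_def)
      next
        case False
        then have "b \<noteq> i2" using ab a2 by simp
        then obtain j' where "distinct [i1,i2,b,j']" using other False by blast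
        from E(2)[OF this] show ?thesis using a2 False d by (simp add: pif_def)
      qed
    next
      case na2: False
      obtain j' where Da: "distinct [i1,i2,a,j']" using other na1 na2 by blast
      show ?thesis
      proof (cases "b = i1")
        case True
        have "g (a, i1) = \<mu>" using E(5)[OF Da] E(1)[OF Da] gi1[OF na1 na2] by linarith
        then show ?thesis using True na1 na2 d by (simp add: pif_def \<mu>_def)
      next
        case nb1: False
        show ?thesis
        proof (cases "b = i2")
          case True
          have "g (a, i2) = \<mu>" using E(3)[OF Da] E(2)[OF Da] gi1[OF na1 na2] by linarith
          then show ?thesis using True na1 na2 d by (simp add: pif_def \<mu>_def)
        next
          case nb2: False
          have Dab: "distinct [i1,i2,a,b]" using na1 na2 nb1 nb2 ab d by auto
          have "g (a, b) = - \<mu>" using E(4)[OF Dab] gi1[OF nb1 nb2] by linarith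
          then show ?thesis using nb1 nb2 na1 na2 ab by (simp add: pif_def \<mu>_def)
        qed
      qed
    qed
  qed
qed



lemma convex_ff_le:
  assumes d: "i1 \<noteq> i2"
  shows "convex {x. ff i1 i2 x \<le> (c::real)}"
proof (rule convexI)
  fix x y and u v :: real
  assume x: "x \<in> {x. ff i1 i2 x \<le> c}" and y: "y \<in> {x. ff i1 i2 x \<le> c}" and uv0: "0 \<le> u" "0 \<le> v" "u + v = 1"
  then have uv: "0 \<le> u \<and> 0 \<le> v \<and> u + v = 1" by simp
  have "ff i1 i2 (u *\<^sub>R x + v *\<^sub>R y) = u * ff i1 i2 x + v * ff i1 i2 y"
    unfolding ff_L[OF d] L_linear ..
  also have "\<dots> \<le> u * c + v * c"
    using x y uv by (intro add_mono mult_left_mono) auto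
  also have "\<dots> = (u + v) * c" by (simp add: algebra_simps)
  also have "\<dots> = c" using uv by simp
  finally show "u *\<^sub>R x + v *\<^sub>R y \<in> {x. ff i1 i2 x \<le> c}" by simp
qed

lemma inner_L: "inner y x = L (\<lambda>p. y $ p) (x :: real ^ ('a::finite \<times> 'a))"
  unfolding L_def inner_vec_def by simp

lemma main_ff:
  fixes i1 i2 :: "'a::finite"
  assumes n4: "CARD('a) \<ge> 4" and d: "i1 \<noteq> i2"
  shows "defines_facet (weak_order_polytope :: (real ^ ('a \<times> 'a)) set)
           (CARD('a) * (CARD('a) - 1)) (ff i1 i2) (cst CARD('a))"
proof -
  obtain h where "bij_betw h (UNIV::'a set) {0..<card (UNIV::'a set)}"
    using ex_bij_betw_finite_nat[of "UNIV::'a set"] by auto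
  then have inj: "inj h" by (simp add: bij_betw_def)
  have ex3: "\<exists>z. z \<notin> A" if "card A < CARD('a)" for A :: "'a set"
    using that by (metis UNIV_eq_I card_mono finite not_le subset_UNIV subset_antisym)
  obtain j where j: "j \<notin> {i1,i2}" using ex3[of "{i1,i2}"] n4 d by (auto simp: card_insert_if)
  have c3: "card {i1,i2,j} \<le> 3" by (simp add: card_insert_if)
  obtain j' where j': "j' \<notin> {i1,i2,j}" using ex3[of "{i1,i2,j}"] n4 c3 by fastforce
  have dist: "distinct [i1,i2,j,j']" using d j j' by auto
  define P where "P = (weak_order_polytope :: (real ^ ('a \<times> 'a)) set)"
  define V where "V = {char_vec W | W::('a\<times>'a) set. weak_order W}"
  have PV: "P = convex hull V" unfolding P_def V_def weak_order_polytope_def ..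
  define c where "c = cst CARD('a)"
  define x0 where "x0 = char_vec (WOr (rk i1 i2 j j' h 0 1 2 3))"
  have x0V: "x0 \<in> V" unfolding x0_def V_def using weak_order_WOr by blast
  have x0c: "ff i1 i2 x0 = c" unfolding x0_def c_def by (rule base_tight[OF dist inj n4])
  define x1 where "x1 = char_vec (WOr (rk i1 i2 j j' h 1 0 2 3))"
  have x1V: "x1 \<in> V" unfolding x1_def V_def using weak_order_WOr by blast
  have "L (pif i1 i2) x1 - L (pif i1 i2) x0 = -1"
    unfolding x0_def x1_def using dist_neq[OF dist] by (simp add: diff4 pif_def rk_eval[OF dist])
  then have x1c: "ff i1 i2 x1 \<noteq> c" using x0c unfolding ff_L[OF d] by simp
  have valid: "\<forall>x\<in>P. ff i1 i2 x \<le> c"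
  proof -
    have "V \<subseteq> {x. ff i1 i2 x \<le> c}" unfolding V_def c_def using valid_wo[OF _ n4 d] by blast
    then have "P \<subseteq> {x. ff i1 i2 x \<le> c}" unfolding PV by (rule hull_minimal) (rule convex_ff_le[OF d])
    then show ?thesis by blast
  qed
  define F where "F = P \<inter> {x. ff i1 i2 x = c}"
  have x0F: "x0 \<in> F" unfolding F_def PV using x0V x0c hull_inc by fastforce
  have x1P: "x1 \<in> P" unfolding PV using x1V hull_inc by fastforce
  have FP: "F \<noteq> P" using x1P x1c unfolding F_def by blast
  define VF where "VF = {char_vec W | W::('a\<times>'a) set. weak_order W \<and> ff i1 i2 (char_vec W) = c}"
  have VFF: "VF \<subseteq> F" unfolding VF_def F_def PV using hull_inc[of _ V] unfolding V_def by blast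
  have x0VF: "x0 \<in> VF" unfolding VF_def x0_def using weak_order_WOr x0c[unfolded x0_def] by blast
  have sum_comp: "\<And>(f::'a \<Rightarrow> real ^ ('a \<times> 'a)) S q. (sum f S) $ q = (\<Sum>i\<in>S. f i $ q)"
    by (subst sum_eq) simp
  define Ds where "Ds = (+) (- x0) ` VF"
  have ad: "aff_dim VF = int (dim Ds)" unfolding Ds_def by (rule aff_dim_eq_dim) (rule hull_inc[OF x0VF])
  define A where "A = span Ds"
  define Y where "Y = {y \<in> UNIV. \<forall>x\<in>A. orthogonal x y}"
  have "dim Y + dim A = dim (UNIV :: (real^('a\<times>'a)) set)"
    unfolding Y_def A_def by (rule dim_subspace_orthogonal_to_vectors) (auto simp: subspace_span)
  then have dYA: "dim Y + dim Ds = CARD('a) * CARD('a)" by (simp add: A_def)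
  define pv :: "real^('a\<times>'a)" where "pv = (\<chi> p. pif i1 i2 p)"
  define E where "E = insert pv (range (\<lambda>i. axis (i,i) (1::real)))"
  have finE: "finite E" unfolding E_def by simp
  have cE: "card E \<le> CARD('a) + 1"
  proof -
    have "card E \<le> Suc (card (range (\<lambda>i. axis (i,i) (1::real)) :: (real^('a\<times>'a)) set))"
      unfolding E_def by (rule card_insert_le_m1) simp_all
    also have "card (range (\<lambda>i. axis (i,i) (1::real)) :: (real^('a\<times>'a)) set) \<le> CARD('a)"
      by (rule card_image_le) simp
    finally show ?thesis by simp
  qed
  have jd: "j \<noteq> i1" "j \<noteq> i2" using j by auto
  have YE: "Y \<subseteq> span E"
  proof
    fix y assume "y \<in> Y"
    then have orth: "\<forall>x\<in>Ds. inner x y = 0" unfolding Y_def A_def orthogonal_def using span_base by blast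
    have H: "L (\<lambda>p. y $ p) (char_vec W) = inner y x0" if "weak_order W" "ff i1 i2 (char_vec W) = cst CARD('a)" for W
    proof -
      have "char_vec W \<in> VF" unfolding VF_def c_def using that by blast
      then have "- x0 + char_vec W \<in> Ds" unfolding Ds_def by blast
      then have "inner (- x0 + char_vec W) y = 0" using orth by blast
      then have "inner y (char_vec W) = inner y x0" by (simp add: inner_diff_right inner_commute)
      then show ?thesis unfolding inner_L .
    qed
    have gf: "y $ (a, b) = y $ (i1, j) * pif i1 i2 (a, b)" if "a \<noteq> b" for a b
      by (rule g_form[OF H d inj n4 jd that])
    have pd: "pif i1 i2 (a, a) = 0" for a unfolding pif_def using d by simp
    have ye: "y = y $ (i1, j) *\<^sub>R pv + (\<Sum>i\<in>UNIV. y $ (i,i) *\<^sub>R axis (i,i) 1)"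
      unfolding vec_eq_iff
    proof
      fix p :: "'a \<times> 'a"
      obtain a b where p: "p = (a, b)" by (cases p)
      show "y $ p = (y $ (i1, j) *\<^sub>R pv + (\<Sum>i\<in>UNIV. y $ (i,i) *\<^sub>R axis (i,i) 1)) $ p"
      proof (cases "a = b")
        case True
        have "(\<Sum>i\<in>UNIV. y $ (i,i) *\<^sub>R axis (i,i) (1::real)) $ p = (\<Sum>i\<in>UNIV. if i = a then y $ (a, a) else 0)"
          unfolding sum_comp p True by (rule sum.cong) (auto simp: axis_def)
        then show ?thesis using True p by (simp add: pv_def pd)
      next
        case False
        have "(\<Sum>i\<in>UNIV. y $ (i,i) *\<^sub>R axis (i,i) (1::real)) $ p = 0"
          unfolding sum_comp p using False by (intro sum.neutral) (auto simp: axis_def)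
        then show ?thesis using False p gf[OF False] by (simp add: pv_def)
      qed
    qed
    have "y $ (i1, j) *\<^sub>R pv + (\<Sum>i\<in>UNIV. y $ (i,i) *\<^sub>R axis (i,i) 1) \<in> span E"
      unfolding E_def
      by (intro span_add span_sum span_mul[unfolded scalar_mult_eq_scaleR] span_base) auto
    then show "y \<in> span E" using ye by simp
  qed
  have "dim Y \<le> card E" by (rule dim_le_card[OF YE finE])
  then have dDs: "dim Ds + CARD('a) + 1 \<ge> CARD('a) * CARD('a)" using dYA cE by linarith
  obtain B where B: "B \<subseteq> VF" "\<not> affine_dependent B" "affine hull VF = affine hull B"
    using affine_basis_exists[of VF] by blast
  have "aff_dim B = aff_dim VF" using B(3) by (metis aff_dim_affine_hull)
  then have "int (card B) = int (dim Ds) + 1" using aff_dim_affine_independent[OF B(2)] ad by simp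
  then have cB: "card B = dim Ds + 1" by simp
  have "CARD('a) * (CARD('a) - 1) \<le> card B" using cB dDs by (simp add: diff_mult_distrib2)
  then obtain S where S: "S \<subseteq> B" "card S = CARD('a) * (CARD('a) - 1)" "finite S"
    by (rule obtain_subset_with_card_n)
  have Sind: "\<not> affine_dependent S" using affine_independent_subset[OF B(2) S(1)] .
  have SF: "S \<subseteq> F" using S(1) B(1) VFF by blast
  show ?thesis
    unfolding defines_facet_def Let_def P_def[symmetric] c_def[symmetric] F_def[symmetric]
    using valid x0F FP SF S Sind by blast
qed

theorem mainTheorem11:
  fixes i1 i2 :: "'a::finite"
  assumes "CARD('a) \<ge> 4" and "i1 \<noteq> i2"
  shows "defines_facet (weak_order_polytope :: (real ^ ('a \<times> 'a)) set)
           (CARD('a) * (CARD('a) - 1))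
           (\<lambda>x. (\<Sum>j\<in>UNIV - {i1, i2}. x $ (i1, j) + x $ (j, i1) + x $ (j, i2))
                 - x $ (i1, i2)
                 - (\<Sum>p\<in>{(j, j'). j \<in> UNIV - {i1, i2} \<and> j' \<in> UNIV - {i1, i2} \<and> j \<noteq> j'}. x $ p))
           (3 - (real CARD('a) - 4) * (real CARD('a) - 5) / 2)"
  using main_ff[OF assms] unfolding ff_def .

end
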